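(* If a hyperplane arrangement $\mathcal{H}\subset\mathbb{CP}^n$ is essential and irreducible, then there exist weights $a_H>0$ ($H\in\mathcal{H}$) such that for every $L\in\mathcal{L}$, $$\sum_{H\supset L}a_H<\frac{\operatorname{codim}L}{n+1}\sum_{H\in\mathcal{H}}a_H .$$
   Context: $\mathcal{H}$ is a finite set of distinct hyperplanes; $\mathcal{L}$ is the set of non-empty proper intersections of its members. $\mathcal{H}$ is essential if $\bigcap_HH=\emptyset$. A splitting is a decomposition $\mathcal{H}=\mathcal{H}_1\cup\mathcal{H}_2$ whose centres (intersections of members; $\mathbb{CP}^n$ for the empty collection) $T_1,T_2$ satisfy $T_1+T_2=\mathbb{CP}^n$ (projective span); non-trivial if both parts are non-empty; $\mathcal{H}$ is irreducible if it has no non-trivial splitting. *)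

theory Defs
  imports "HOL-Analysis.Analysis"
begin

text \<open>CP^n is modelled as the projectivisation of complex^'n with CARD('n) = n+1.
Projective subspaces correspond to complex-linear subspaces of complex^'n
(the empty projective subspace corresponds to the zero subspace).\<close>

definition proj_hyperplane :: "(complex^'n) set \<Rightarrow> bool" where
  "proj_hyperplane S \<longleftrightarrow> vec.subspace S \<and> vec.dim S = CARD('n) - 1"

definition arrangement :: "(complex^'n) set set \<Rightarrow> bool" where
  "arrangement \<H> \<longleftrightarrow> finite \<H> \<and> (\<forall>H\<in>\<H>. proj_hyperplane H)"

definition centre :: "(complex^'n) set set \<Rightarrow> (complex^'n) set" where
  "centre \<G> = \<Inter>\<G>"

definition flats :: "(complex^'n) set set \<Rightarrow> (complex^'n) set set" where
  "flats \<H> = {centre \<G> | \<G>. \<G> \<subseteq> \<H> \<and> centre \<G> \<noteq> {0} \<and> centre \<G> \<noteq> UNIV}"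

definition essential :: "(complex^'n) set set \<Rightarrow> bool" where
  "essential \<H> \<longleftrightarrow> centre \<H> = {0}"

definition proj_join :: "(complex^'n) set \<Rightarrow> (complex^'n) set \<Rightarrow> (complex^'n) set" where
  "proj_join S T = {x + y | x y. x \<in> S \<and> y \<in> T}"

definition splitting :: "(complex^'n) set set \<Rightarrow> (complex^'n) set set \<Rightarrow> (complex^'n) set set \<Rightarrow> bool" where
  "splitting \<H> \<H>1 \<H>2 \<longleftrightarrow> \<H>1 \<union> \<H>2 = \<H> \<and> proj_join (centre \<H>1) (centre \<H>2) = UNIV"

definition irreducible_arr :: "(complex^'n) set set \<Rightarrow> bool" where
  "irreducible_arr \<H> \<longleftrightarrow> \<not> (\<exists>\<H>1 \<H>2. splitting \<H> \<H>1 \<H>2 \<and> \<H>1 \<noteq> {} \<and> \<H>2 \<noteq> {})"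

definition proj_codim :: "(complex^'n) set \<Rightarrow> nat" where
  "proj_codim L = CARD('n) - vec.dim L"

end

theory Submission
  imports Defs
begin

lemma dim0: "vec.dim ({0} :: (complex^'n) set) = 0"
  by (metis vec.dim_span vec.span_empty vec.dim_empty)

lemma e0: "card ({}::(complex^'n) set set) + vec.dim (\<Inter>({}::(complex^'n) set set)) = CARD('n)"
  by (simp add: card_cart_basis)

lemma hyp_sub: "proj_hyperplane H \<Longrightarrow> vec.subspace H"
  by (simp add: proj_hyperplane_def)

lemma inter_sub:
  fixes T :: "(complex^'n) set set"
  assumes "\<forall>H\<in>T. proj_hyperplane H" shows "vec.subspace (\<Inter>T)"
  using assms by (intro vec.subspace_Inter) (auto simp: proj_hyperplane_def)

lemma dimN: "vec.dim (S :: (complex^'n) set) \<le> CARD('n)"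
  by (rule dim_subset_UNIV_cart_gen)

lemma hyp_int:
  fixes A H :: "(complex^'n) set"
  assumes "vec.subspace A" "proj_hyperplane H"
  shows "vec.dim A \<le> vec.dim (A \<inter> H) + 1"
proof -
  have "vec.dim {x + y |x y. x \<in> A \<and> y \<in> H} + vec.dim (A \<inter> H) = vec.dim A + vec.dim H"
    using vec.dim_sums_Int[OF assms(1) hyp_sub[OF assms(2)]] .
  moreover have "vec.dim {x + y |x y. x \<in> A \<and> y \<in> H} \<le> CARD('n)" by (rule dimN)
  moreover have "vec.dim H = CARD('n) - 1" using assms by (simp add: proj_hyperplane_def)
  ultimately show ?thesis by linarith
qed

lemma dim_strict:
  fixes A H :: "(complex^'n) set"
  assumes "vec.subspace A" "vec.subspace H" "\<not> A \<subseteq> H"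
  shows "vec.dim (A \<inter> H) < vec.dim A"
proof -
  have s: "vec.subspace (A \<inter> H)" using assms vec.subspace_inter by blast
  have e: "vec.span (A \<inter> H) = A \<inter> H" "vec.span A = A" using assms s by simp_all
  have "vec.span (A \<inter> H) \<subset> vec.span A" unfolding e using assms by blast
  thus ?thesis by (rule vec.dim_psubset)
qed

lemma sub_bound:
  fixes T :: "(complex^'n) set set" and A :: "(complex^'n) set"
  assumes "finite T" "\<forall>H\<in>T. proj_hyperplane H" "vec.subspace A"
  shows "vec.dim A \<le> vec.dim (A \<inter> \<Inter>T) + card T"
  using assms
proof (induction T rule: finite_induct)
  case empty thus ?case by simp
next
  case (insert H T)
  have s: "vec.subspace (A \<inter> \<Inter>T)"
    using insert inter_sub[of T] vec.subspace_inter by blast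
  have "vec.dim (A \<inter> \<Inter>T) \<le> vec.dim (A \<inter> \<Inter>T \<inter> H) + 1"
    using hyp_int[OF s] insert by auto
  moreover have "A \<inter> \<Inter>(insert H T) = A \<inter> \<Inter>T \<inter> H" by auto
  ultimately show ?case using insert by auto
qed

lemma greedy:
  fixes \<H> I :: "(complex^'n) set set"
  assumes "finite \<H>" "\<forall>H\<in>\<H>. proj_hyperplane H" "I \<subseteq> \<H>"
    "card I + vec.dim (\<Inter>I) = CARD('n)"
  shows "\<exists>B. I \<subseteq> B \<and> B \<subseteq> \<H> \<and> card B + vec.dim (\<Inter>B) = CARD('n) \<and> \<Inter>B = \<Inter>\<H>"
  using assms
proof (induction "card (\<H> - I)" arbitrary: I rule: less_induct)
  case less
  show ?case
  proof (cases "\<Inter>I = \<Inter>\<H>")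
    case True
    have "I \<subseteq> I" by simp
    with True less.prems(3,4) show ?thesis by blast
  next
    case False
    have "\<Inter>\<H> \<subseteq> \<Inter>I" using less.prems(3) by (rule Inter_anti_mono)
    hence "\<not> \<Inter>I \<subseteq> \<Inter>\<H>" using False by blast
    then obtain H where H: "H \<in> \<H>" "\<not> \<Inter>I \<subseteq> H" by (meson le_Inf_iff)
    have HI: "H \<notin> I" using H by blast
    have fI: "finite I" using less.prems finite_subset by blast
    have sI: "vec.subspace (\<Inter>I)" using less.prems inter_sub[of I] by blast
    have "vec.dim (\<Inter>I) \<le> vec.dim (\<Inter>I \<inter> H) + 1"
      using hyp_int[OF sI] H less.prems by auto
    moreover have "vec.dim (\<Inter>I \<inter> H) < vec.dim (\<Inter>I)"
      using dim_strict[OF sI] H less.prems by (auto simp: proj_hyperplane_def)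
    moreover have "\<Inter>(insert H I) = \<Inter>I \<inter> H" by auto
    moreover have "card (insert H I) = card I + 1" using fI HI by simp
    ultimately have c0: "card (insert H I) + vec.dim (\<Inter>I \<inter> H) = CARD('n)"
      using less.prems(4) by linarith
    have c: "card (insert H I) + vec.dim (\<Inter>(insert H I)) = CARD('n)"
      using c0 by (simp add: Int_commute)
    have lt: "card (\<H> - insert H I) < card (\<H> - I)"
      using H HI less.prems(1) by (intro psubset_card_mono) auto
    have ins: "insert H I \<subseteq> \<H>" using H less.prems(3) by blast
    from less.hyps[OF lt less.prems(1,2) ins c]
    obtain B where B1: "insert H I \<subseteq> B" and B2: "B \<subseteq> \<H>" and B3: "card B + vec.dim (\<Inter>B) = CARD('n)" and B4: "\<Inter>B = \<Inter>\<H>"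
      by blast
    have IB: "I \<subseteq> B" using B1 by (meson subset_insertI subset_trans)
    show ?thesis by (rule exI[of _ B]) (intro conjI IB B2 B3 B4)
  qed
qed

theorem corollaryB2:
  fixes \<H> :: "(complex^'n) set set"
  assumes "arrangement \<H>" and "essential \<H>" and "irreducible_arr \<H>"
  shows "\<exists>a :: (complex^'n) set \<Rightarrow> real. (\<forall>H\<in>\<H>. a H > 0) \<and>
           (\<forall>L\<in>flats \<H>. (\<Sum>H\<in>{H\<in>\<H>. L \<subseteq> H}. a H)
              < real (proj_codim L) / real CARD('n) * (\<Sum>H\<in>\<H>. a H))"
proof -
  define N where "N = CARD('n)"
  have fin: "finite \<H>" and hyp: "\<forall>H\<in>\<H>. proj_hyperplane H"
    using assms(1) by (auto simp: arrangement_def)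
  have ess: "\<Inter>\<H> = {0}" using assms(2) by (simp add: essential_def centre_def)
  define bases where "bases = {B. B \<subseteq> \<H> \<and> card B = N \<and> \<Inter>B = {0}}"
  have finB: "finite bases" unfolding bases_def
    by (rule finite_subset[of _ "Pow \<H>"]) (use fin in auto)
  have ext: "\<exists>B\<in>bases. I \<subseteq> B" if I1: "I \<subseteq> \<H>" and I2: "card I + vec.dim (\<Inter>I) = N" for I
  proof -
    obtain B where "I \<subseteq> B" "B \<subseteq> \<H>" "card B + vec.dim (\<Inter>B) = N" "\<Inter>B = {0}"
      using greedy[OF fin hyp I1] I2 ess N_def by auto
    thus ?thesis using dim0 unfolding bases_def by auto
  qed
  have Npos: "N \<ge> 1" unfolding N_def by simp
  obtain B0 where B0: "B0 \<in> bases" using ext[of "{}"] e0 N_def by auto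
  have inB: "\<exists>B\<in>bases. H \<in> B" if "H \<in> \<H>" for H
  proof -
    have "card {H} + vec.dim (\<Inter>{H}) = N"
      using hyp that Npos by (auto simp: proj_hyperplane_def N_def)
    thus ?thesis using ext[of "{H}"] that by auto
  qed
  define a where "a H = real (card {B\<in>bases. H \<in> B})" for H
  have sumS: "(\<Sum>H\<in>S. a H) = (\<Sum>B\<in>bases. real (card (B \<inter> S)))" if "S \<subseteq> \<H>" for S
  proof -
    have fS: "finite S" using that fin finite_subset by blast
    have "(\<Sum>H\<in>S. a H) = (\<Sum>H\<in>S. \<Sum>B\<in>bases. if H \<in> B then 1 else 0)"
      unfolding a_def by (simp add: sum.inter_filter[OF finB, symmetric])
    also have "\<dots> = (\<Sum>B\<in>bases. \<Sum>H\<in>S. if H \<in> B then 1 else 0)" by (rule sum.swap)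
    also have "\<dots> = (\<Sum>B\<in>bases. real (card (B \<inter> S)))"
    proof (rule sum.cong[OF refl])
      fix B
      have "(\<Sum>H\<in>S. if H \<in> B then 1 else (0::real)) = real (card {H\<in>S. H \<in> B})"
        by (simp add: sum.inter_filter[OF fS, symmetric])
      also have "{H\<in>S. H \<in> B} = B \<inter> S" by auto
      finally show "(\<Sum>H\<in>S. if H \<in> B then 1 else (0::real)) = real (card (B \<inter> S))" .
    qed
    finally show ?thesis .
  qed
  have total: "(\<Sum>H\<in>\<H>. a H) = real N * real (card bases)"
  proof -
    have "(\<Sum>H\<in>\<H>. a H) = (\<Sum>B\<in>bases. real (card (B \<inter> \<H>)))" using sumS by blast
    also have "\<dots> = (\<Sum>B\<in>bases. real N)"
      by (rule sum.cong) (auto simp: bases_def Int_absorb2)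
    finally show ?thesis by simp
  qed
  have "\<forall>L\<in>flats \<H>. (\<Sum>H\<in>{H\<in>\<H>. L \<subseteq> H}. a H)
              < real (proj_codim L) / real CARD('n) * (\<Sum>H\<in>\<H>. a H)"
  proof
    fix L assume "L \<in> flats \<H>"
    then obtain \<G> where G: "\<G> \<subseteq> \<H>" "L = \<Inter>\<G>" "L \<noteq> {0}" "L \<noteq> UNIV"
      unfolding flats_def centre_def by auto
    define F where "F = {H\<in>\<H>. L \<subseteq> H}"
    define G2 where "G2 = \<H> - F"
    have FH: "F \<subseteq> \<H>" unfolding F_def by auto
    have LF: "\<Inter>F = L" using G unfolding F_def by auto
    have dL: "vec.dim L \<le> N" unfolding N_def by (rule dimN)
    have le: "card (B \<inter> F) \<le> N - vec.dim L" if "B \<in> bases" for B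
    proof -
      have B: "B \<subseteq> \<H>" "card B = N" "\<Inter>B = {0}" using that bases_def by auto
      have fBF: "finite (B - F)" using B fin finite_subset by blast
      have s: "vec.subspace (\<Inter>(B \<inter> F))" using inter_sub[of "B \<inter> F"] hyp B by blast
      have "vec.dim (\<Inter>(B \<inter> F)) \<le> vec.dim (\<Inter>(B \<inter> F) \<inter> \<Inter>(B - F)) + card (B - F)"
        using sub_bound[OF fBF _ s] hyp B by blast
      moreover have "\<Inter>(B \<inter> F) \<inter> \<Inter>(B - F) = \<Inter>B" by auto
      moreover have "vec.dim L \<le> vec.dim (\<Inter>(B \<inter> F))"
        by (rule vec.dim_subset) (auto simp: F_def)
      moreover have "card (B - F) + card (B \<inter> F) = N"
        using card_Int_Diff[OF finite_subset[OF B(1) fin], of F] B(2) by linarith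
      ultimately show ?thesis using B dim0 by simp
    qed
    have lt: "\<exists>B\<in>bases. card (B \<inter> F) < N - vec.dim L"
    proof (rule ccontr)
      assume "\<not> ?thesis"
      hence ge: "\<forall>B\<in>bases. N - vec.dim L \<le> card (B \<inter> F)" by auto
      have finG: "finite G2" using fin G2_def by auto
      have hypG: "\<forall>H\<in>G2. proj_hyperplane H" using hyp G2_def by auto
      obtain I where I: "I \<subseteq> G2" "card I + vec.dim (\<Inter>I) = N" "\<Inter>I = \<Inter>G2"
        using greedy[OF finG hypG _ e0] N_def by auto
      obtain B where B: "B \<in> bases" "I \<subseteq> B" using ext[of I] I G2_def by auto
      have Bp: "B \<subseteq> \<H>" "card B = N" using B bases_def by auto
      have fB: "finite B" using Bp fin finite_subset by blast
      have "B \<inter> F \<subseteq> B - I" using I G2_def by auto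
      hence "card (B \<inter> F) \<le> card (B - I)" using fB by (intro card_mono) auto
      also have "card (B - I) = N - card I" using Bp B(2) fB finite_subset[OF B(2) fB] card_Diff_subset[of I B] by simp
      finally have "N - vec.dim L \<le> vec.dim (\<Inter>G2)" using ge B I by force
      hence dsum: "N \<le> vec.dim L + vec.dim (\<Inter>G2)" using dL by linarith
      have sL: "vec.subspace L" using inter_sub[of F] hyp FH LF by auto
      have sM: "vec.subspace (\<Inter>G2)" using inter_sub[OF hypG] .
      have "L \<inter> \<Inter>G2 = \<Inter>\<H>" using LF G2_def FH by auto
      hence "vec.dim {x + y |x y. x \<in> L \<and> y \<in> \<Inter>G2} = vec.dim L + vec.dim (\<Inter>G2)"
        using vec.dim_sums_Int[OF sL sM] ess dim0 by simp
      hence "vec.dim (UNIV::(complex^'n) set) \<le> vec.dim {x + y |x y. x \<in> L \<and> y \<in> \<Inter>G2}"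
        using dsum N_def vec_dim_card by (metis)
      hence "vec.span {x + y |x y. x \<in> L \<and> y \<in> \<Inter>G2} = vec.span UNIV"
        by (intro vec.dim_eq_span) auto
      hence "vec.span {x + y |x y. x \<in> L \<and> y \<in> \<Inter>G2} = UNIV" by simp
      hence "{x + y |x y. x \<in> L \<and> y \<in> \<Inter>G2} = UNIV"
        using vec.span_eq_iff[THEN iffD2, OF vec.subspace_sums[OF sL sM]] by metis
      hence j: "proj_join (centre F) (centre G2) = UNIV"
        using LF unfolding proj_join_def centre_def by metis
      have "splitting \<H> F G2" using j FH G2_def by (auto simp: splitting_def)
      moreover have "F \<noteq> {}" using LF G by auto
      moreover have "G2 \<noteq> {}" using LF G ess G2_def FH by auto
      ultimately show False using assms(3) by (auto simp: irreducible_arr_def)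
    qed
    have "(\<Sum>H\<in>F. a H) = (\<Sum>B\<in>bases. real (card (B \<inter> F)))" using sumS FH by blast
    also have "\<dots> < (\<Sum>B\<in>bases. real (N - vec.dim L))"
      using le lt finB by (intro sum_strict_mono_ex1) auto
    also have "\<dots> = real (proj_codim L) / real CARD('n) * (\<Sum>H\<in>\<H>. a H)"
      using total Npos by (simp add: proj_codim_def N_def)
    finally show "(\<Sum>H\<in>{H\<in>\<H>. L \<subseteq> H}. a H)
              < real (proj_codim L) / real CARD('n) * (\<Sum>H\<in>\<H>. a H)" by (simp add: F_def)
  qed
  moreover have "\<forall>H\<in>\<H>. a H > 0"
  proof
    fix H assume "H \<in> \<H>"
    then obtain B where "B \<in> bases" "H \<in> B" using inB by blast
    hence "{B\<in>bases. H \<in> B} \<noteq> {}" by auto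
    thus "a H > 0" using finB by (simp add: a_def card_gt_0_iff)
  qed
  ultimately show ?thesis by blast
qed

end
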